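(* Consider running GD-$k$ with rate $r=\frac{1}{\gamma k^2}$ on an instance $\sigma$ of $k$-MPMD on an $H$-metric space with parameter $\gamma$, and let $\mathcal M=\{M_1,\ldots,M_p\}$ be the output perfect $k$-way matching, where $M_\ell=\{v_{\ell,1},\ldots,v_{\ell,k}\}$ is matched at time $\tau_\ell$. Let $T$ be the time at which all requests are matched. Then the total waiting cost satisfies $$\sum_{\ell=1}^p\sum_{i=1}^k(\tau_\ell-\mathrm{atime}(v_{\ell,i}))=\frac1r\sum_{S\subseteq V}\mathrm{sur}(S)\,y_S(T)\le\frac1r\,\mathcal D'(\sigma),$$ where $\mathcal D'(\sigma)$ is the optimal value of $(\mathcal D')$.
   Context: $k\ge2$. An $H$-metric with parameter $\gamma$ (integer, $1\le\gamma\le k-1$) is a map $d_H:\chi^k\to[0,\infty)$ that is invariant under permutation of its arguments, is zero iff all arguments are equal, satisfies $d_H(p_1,\ldots,p_k)\le d_H(p_1,\ldots,p_i,a,\ldots,a)+d_H(a,\ldots,a,p_{i+1},\ldots,p_k)$ for all $p_j,a\in\chi$ and $i\in\{1,\dots,k\}$ (with $k-i$, resp. $i$, copies of $a$), and satisfies: $d_H(p)\le d_H(p')$ whenever the set of distinct entries of $p$ is a proper subset of that of $p'$, and $d_H(p)\le\gamma d_H(p')$ whenever these sets are equal. An instance is $\sigma=(V,\mathrm{atime},\mathrm{pos})$ with $V=\{u_1,\ldots,u_m\}$ ($m$ a multiple of $k$), nondecreasing arrival times $\mathrm{atime}:V\to\mathbb R_{\ge0}$ and positions $\mathrm{pos}:V\to\chi$.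 The metric $d$ on $\chi$ is $d(p,q):=d_H(p,q,\ldots,q)+d_H(q,p,\ldots,p)$ (first argument once, second $k-1$ times); $E$ is the set of unordered pairs of distinct requests, $\mathrm{opt\text{-}cost}(\{u,w\}):=d(\mathrm{pos}(u),\mathrm{pos}(w))+|\mathrm{atime}(u)-\mathrm{atime}(w)|$; for $S\subseteq V$, $\mathrm{sur}(S):=|S|\bmod k$ and $\delta(S)$ is the set of pairs with exactly one element in $S$. The LP $(\mathcal D')$ is: maximize $\sum_{S\subseteq V}\mathrm{sur}(S)(k-\mathrm{sur}(S))y_S$ subject to $\sum_{S:e\in\delta(S)}y_S\le\frac{1}{\gamma k^2}\mathrm{opt\text{-}cost}(e)$ for all $e\in E$ and $y_S\ge0$ for all $S\subseteq V$. Algorithm GD-$k$ (Greedy Dual for $k$-MPMD) runs in continuous time from $0$. It maintains: a partition of the already-arrived requests into "active sets" ($A(v)$ denotes the active set containing $v$); a family $\mathcal M$ of disjoint $k$-element sets of requests (the groups matched so far); a request is free if it lies in no set of $\mathcal M$, and $\mathrm{free}(S)$ is the set of free requests of $S$; and dual values $y_S(\tau)\ge0$ for $S\subseteq V$, all initially $0$. When a request $v$ arrives, $A(v):=\{v\}$ is created. At every moment, for each active set $S$ with $\mathrm{free}(S)\ne\emptyset$, $y_S$ increases continuously at rate $r$; all other $y_S$ stay constant. Whenever a pair $e=\{u,w\}$ of arrived requests with $A(u)\ne A(w)$ becomes tight, i.e. $\sum_{S:e\in\delta(S)}y_S=\frac{1}{\gamma k^2}\mathrm{opt\text{-}cost}(e)$,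 the algorithm replaces $A(u)$ and $A(w)$ by the single active set $S=A(u)\cup A(w)$, marks $e$, and, while $|\mathrm{free}(S)|\ge k$, chooses arbitrarily $k$ free requests of $S$ and adds them as a group to $\mathcal M$ (they are matched at the current time). *)

theory Defs
  imports Complex_Main "HOL-Library.Multiset"
begin

text \<open>An H-metric of arity k with parameter gamma on points of type 'p.
  Arguments are represented as lists of length k; values on other lists are irrelevant.\<close>

definition is_Hmetric :: "nat \<Rightarrow> nat \<Rightarrow> ('p list \<Rightarrow> real) \<Rightarrow> bool" where
  "is_Hmetric k \<gamma> dH \<longleftrightarrow>
     (\<forall>p. length p = k \<longrightarrow> dH p \<ge> 0) \<and>
     (\<forall>p q. length p = k \<longrightarrow> mset q = mset p \<longrightarrow> dH q = dH p) \<and>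
     (\<forall>p. length p = k \<longrightarrow> (dH p = 0 \<longleftrightarrow> (\<forall>i<k. \<forall>j<k. p ! i = p ! j))) \<and>
     (\<forall>p a i. length p = k \<longrightarrow> 1 \<le> i \<longrightarrow> i \<le> k \<longrightarrow>
        dH p \<le> dH (take i p @ replicate (k - i) a) + dH (replicate i a @ drop i p)) \<and>
     (\<forall>p p'. length p = k \<longrightarrow> length p' = k \<longrightarrow> set p \<subset> set p' \<longrightarrow> dH p \<le> dH p') \<and>
     (\<forall>p p'. length p = k \<longrightarrow> length p' = k \<longrightarrow> set p = set p' \<longrightarrow> dH p \<le> real \<gamma> * dH p')"

definition Hdist :: "nat \<Rightarrow> ('p list \<Rightarrow> real) \<Rightarrow> 'p \<Rightarrow> 'p \<Rightarrow> real" where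
  "Hdist k dH p q = dH (p # replicate (k - 1) q) + dH (q # replicate (k - 1) p)"

definition opt_cost :: "nat \<Rightarrow> ('p list \<Rightarrow> real) \<Rightarrow> ('v \<Rightarrow> real) \<Rightarrow> ('v \<Rightarrow> 'p) \<Rightarrow> 'v \<Rightarrow> 'v \<Rightarrow> real" where
  "opt_cost k dH atime pos u w = Hdist k dH (pos u) (pos w) + \<bar>atime u - atime w\<bar>"

definition sur :: "nat \<Rightarrow> 'v set \<Rightarrow> nat" where
  "sur k S = card S mod k"

text \<open>The pair {u,w} lies in delta(S) iff exactly one of u, w is in S.\<close>
definition crosses :: "'v set \<Rightarrow> 'v \<Rightarrow> 'v \<Rightarrow> bool" where
  "crosses S u w \<longleftrightarrow> (u \<in> S) \<noteq> (w \<in> S)"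

definition load :: "'v set \<Rightarrow> ('v set \<Rightarrow> real) \<Rightarrow> 'v \<Rightarrow> 'v \<Rightarrow> real" where
  "load V y u w = (\<Sum>S\<in>{S. S \<subseteq> V \<and> crosses S u w}. y S)"

definition D'_feasible :: "'v set \<Rightarrow> ('v \<Rightarrow> 'v \<Rightarrow> real) \<Rightarrow> ('v set \<Rightarrow> real) \<Rightarrow> bool" where
  "D'_feasible V bound y \<longleftrightarrow>
     (\<forall>S. S \<subseteq> V \<longrightarrow> y S \<ge> 0) \<and>
     (\<forall>u\<in>V. \<forall>w\<in>V. u \<noteq> w \<longrightarrow> load V y u w \<le> bound u w)"

definition D'_obj :: "nat \<Rightarrow> 'v set \<Rightarrow> ('v set \<Rightarrow> real) \<Rightarrow> real" where
  "D'_obj k V y = (\<Sum>S\<in>Pow V. real (sur k S * (k - sur k S)) * y S)"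

definition D'_opt :: "nat \<Rightarrow> nat \<Rightarrow> ('p list \<Rightarrow> real) \<Rightarrow> 'v set \<Rightarrow> ('v \<Rightarrow> real) \<Rightarrow> ('v \<Rightarrow> 'p) \<Rightarrow> real" where
  "D'_opt k \<gamma> dH V atime pos =
     Sup {D'_obj k V y | y. D'_feasible V (\<lambda>u w. opt_cost k dH atime pos u w / (real \<gamma> * real k ^ 2)) y}"

text \<open>State: current time, the family of active sets (a partition of the arrived requests),
  the matched groups together with their matching times, and the dual values y.\<close>
record 'v gd_state =
  clock :: real
  act :: "'v set set"
  grp :: "('v set \<times> real) set"
  yv :: "'v set \<Rightarrow> real"

definition gd_init :: "'v gd_state" where
  "gd_init = \<lparr>clock = 0, act = {}, grp = {}, yv = (\<lambda>_. 0)\<rparr>"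

definition free :: "('v set \<times> real) set \<Rightarrow> 'v set \<Rightarrow> 'v set" where
  "free G S = S - \<Union>(fst ` G)"

definition same_active :: "'v set set \<Rightarrow> 'v \<Rightarrow> 'v \<Rightarrow> bool" where
  "same_active A u w \<longleftrightarrow> (\<exists>S\<in>A. u \<in> S \<and> w \<in> S)"

definition grow :: "real \<Rightarrow> 'v gd_state \<Rightarrow> real \<Rightarrow> 'v set \<Rightarrow> real" where
  "grow r s t S = yv s S + (if S \<in> act s \<and> free (grp s) S \<noteq> {} then r * (t - clock s) else 0)"

text \<open>Parameters: k, rate r, request set V, arrival times, and the
  tightness bound for each pair (opt-cost/(gamma k^2)).
  - arrive: a request arriving at the current time gets its singleton active set;
  - merge: a tight pair across two active sets merges them, and then groups of k free
    requests of the merged set are matched at the current time until fewer than k remain free;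
  - advance: time runs (duals grow continuously) from clock s to t, provided no request arrives
    strictly before t, no cross pair is tight at clock s, and no constraint is exceeded at t
    (so no pair becomes tight strictly inside the interval).\<close>
inductive gd_step :: "nat \<Rightarrow> real \<Rightarrow> 'v set \<Rightarrow> ('v \<Rightarrow> real) \<Rightarrow> ('v \<Rightarrow> 'v \<Rightarrow> real)
    \<Rightarrow> 'v gd_state \<Rightarrow> 'v gd_state \<Rightarrow> bool"
  for k r V atime bound where
  arrive: "\<lbrakk> v \<in> V; v \<notin> \<Union>(act s); atime v = clock s \<rbrakk>
     \<Longrightarrow> gd_step k r V atime bound s (s\<lparr>act := insert {v} (act s)\<rparr>)"
| merge: "\<lbrakk> S1 \<in> act s; S2 \<in> act s; S1 \<noteq> S2; u \<in> S1; w \<in> S2;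
     load V (yv s) u w = bound u w;
     \<forall>g\<in>NG. g \<subseteq> free (grp s) (S1 \<union> S2) \<and> card g = k;
     pairwise disjnt NG;
     card (free (grp s) (S1 \<union> S2) - \<Union>NG) < k \<rbrakk>
     \<Longrightarrow> gd_step k r V atime bound s
           (s\<lparr>act := insert (S1 \<union> S2) (act s - {S1, S2}),
              grp := grp s \<union> (\<lambda>g. (g, clock s)) ` NG\<rparr>)"
| advance: "\<lbrakk> clock s < t;
     \<forall>w\<in>V - \<Union>(act s). t \<le> atime w;
     \<forall>u\<in>\<Union>(act s). \<forall>w\<in>\<Union>(act s). \<not> same_active (act s) u w \<longrightarrow> load V (yv s) u w < bound u w;
     \<forall>u\<in>\<Union>(act s). \<forall>w\<in>\<Union>(act s). \<not> same_active (act s) u w \<longrightarrow> load V (grow r s t) u w \<le> bound u w \<rbrakk>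
     \<Longrightarrow> gd_step k r V atime bound s (s\<lparr>clock := t, yv := grow r s t\<rparr>)"

definition waiting_cost :: "('v \<Rightarrow> real) \<Rightarrow> ('v set \<times> real) set \<Rightarrow> real" where
  "waiting_cost atime G = (\<Sum>(M, \<tau>)\<in>G. \<Sum>v\<in>M. (\<tau> - atime v))"

end

theory Submission
  imports Defs
begin

definition ginv :: "nat \<Rightarrow> real \<Rightarrow> 'v set \<Rightarrow> ('v\<Rightarrow>real) \<Rightarrow> ('v\<Rightarrow>'v\<Rightarrow>real) \<Rightarrow> 'v gd_state \<Rightarrow> bool" where
"ginv k r V atime bound s \<longleftrightarrow>
 (\<forall>S\<in>act s. S \<noteq> {} \<and> S \<subseteq> V) \<and>
 (\<forall>S\<in>act s. \<forall>T\<in>act s. S \<noteq> T \<longrightarrow> S \<inter> T = {}) \<and>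
 (\<forall>S\<in>act s. card (free (grp s) S) = sur k S) \<and>
 \<Union>(fst ` grp s) \<subseteq> \<Union>(act s) \<and>
 finite (grp s) \<and>
 (\<forall>S. yv s S \<noteq> 0 \<longrightarrow> S \<subseteq> \<Union>(act s)) \<and>
 (\<forall>S. yv s S \<ge> 0) \<and>
 (\<forall>w\<in>V - \<Union>(act s). clock s \<le> atime w) \<and>
 (\<forall>w\<in>\<Union>(act s). (\<Sum>S\<in>{S\<in>Pow V. w \<in> S}. yv s S) \<le> r * (clock s - atime w)) \<and>
 (\<forall>u\<in>\<Union>(act s). \<forall>w\<in>\<Union>(act s). u \<noteq> w \<longrightarrow> load V (yv s) u w \<le> bound u w) \<and>
 waiting_cost atime (grp s) + (\<Sum>v\<in>free (grp s) (\<Union>(act s)). (clock s - atime v))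
   = (1/r) * (\<Sum>S\<in>Pow V. real (sur k S) * yv s S)"

lemmas ginvD1 = ginv_def[THEN iffD1, THEN conjunct1]
lemmas ginvD2 = ginv_def[THEN iffD1, THEN conjunct2, THEN conjunct1]
lemmas ginvD3 = ginv_def[THEN iffD1, THEN conjunct2, THEN conjunct2, THEN conjunct1]
lemmas ginvD4 = ginv_def[THEN iffD1, THEN conjunct2, THEN conjunct2, THEN conjunct2, THEN conjunct1]
lemmas ginvD5 = ginv_def[THEN iffD1, THEN conjunct2, THEN conjunct2, THEN conjunct2, THEN conjunct2, THEN conjunct1]
lemmas ginvD6 = ginv_def[THEN iffD1, THEN conjunct2, THEN conjunct2, THEN conjunct2, THEN conjunct2, THEN conjunct2, THEN conjunct1]
lemmas ginvD7 = ginv_def[THEN iffD1, THEN conjunct2, THEN conjunct2, THEN conjunct2, THEN conjunct2, THEN conjunct2, THEN conjunct2, THEN conjunct1]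
lemmas ginvD8 = ginv_def[THEN iffD1, THEN conjunct2, THEN conjunct2, THEN conjunct2, THEN conjunct2, THEN conjunct2, THEN conjunct2, THEN conjunct2, THEN conjunct1]
lemmas ginvD9 = ginv_def[THEN iffD1, THEN conjunct2, THEN conjunct2, THEN conjunct2, THEN conjunct2, THEN conjunct2, THEN conjunct2, THEN conjunct2, THEN conjunct2, THEN conjunct1]
lemmas ginvD10 = ginv_def[THEN iffD1, THEN conjunct2, THEN conjunct2, THEN conjunct2, THEN conjunct2, THEN conjunct2, THEN conjunct2, THEN conjunct2, THEN conjunct2, THEN conjunct2, THEN conjunct1]
lemmas ginvD11 = ginv_def[THEN iffD1, THEN conjunct2, THEN conjunct2, THEN conjunct2, THEN conjunct2, THEN conjunct2, THEN conjunct2, THEN conjunct2, THEN conjunct2, THEN conjunct2, THEN conjunct2]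

lemma load_sym: "load V y u w = load V y w u"
  unfolding load_def crosses_def by metis

lemma load_le_star:
  assumes "finite V" "\<forall>S. y S \<ge> 0" "\<forall>S. y S \<noteq> 0 \<longrightarrow> v \<notin> S"
  shows "load V y v w \<le> (\<Sum>S\<in>{S\<in>Pow V. w \<in> S}. y S)"
proof -
  have fin: "finite {S. S \<subseteq> V \<and> crosses S v w}"
    by (rule finite_subset[of _ "Pow V"]) (use assms(1) in auto)
  have "load V y v w = (\<Sum>S\<in>{S. S \<subseteq> V \<and> crosses S v w}. if w \<in> S then y S else 0)"
    unfolding load_def
    by (rule sum.cong) (use assms(3) in \<open>auto simp: crosses_def\<close>)
  also have "\<dots> = (\<Sum>S\<in>{S\<in>{S. S \<subseteq> V \<and> crosses S v w}. w \<in> S}. y S)"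
    using sum.inter_filter[OF fin, of y "\<lambda>S. w \<in> S"] by simp
  also have "\<dots> \<le> (\<Sum>S\<in>{S\<in>Pow V. w \<in> S}. y S)"
    by (rule sum_mono2) (use assms in auto)
  finally show ?thesis .
qed

lemma ginv_init:
  assumes "\<forall>w\<in>V. 0 \<le> atime w"
  shows "ginv k r V atime bound gd_init"
  using assms unfolding ginv_def gd_init_def load_def waiting_cost_def free_def by simp

lemma ginv_arrive:
  assumes fV: "finite V" and r: "r > 0" and k: "k \<ge> 2"
    and B: "\<forall>u\<in>V. \<forall>w\<in>V. r * \<bar>atime u - atime w\<bar> \<le> bound u w"
    and I: "ginv k r V atime bound s" and v: "v \<in> V" "v \<notin> \<Union>(act s)" "atime v = clock s"
  shows "ginv k r V atime bound (s\<lparr>act := insert {v} (act s)\<rparr>)"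
proof -
  let ?U = "\<Union>(act s)"
  let ?F = "free (grp s)"
  note Id = I[unfolded ginv_def]
  have i1: "\<forall>S\<in>act s. S \<noteq> {} \<and> S \<subseteq> V" using ginvD1[OF I] .
  have i2: "\<forall>S\<in>act s. \<forall>T\<in>act s. S \<noteq> T \<longrightarrow> S \<inter> T = {}" using ginvD2[OF I] .
  have i3: "\<forall>S\<in>act s. card (?F S) = sur k S" using ginvD3[OF I] .
  have i4: "\<Union>(fst ` grp s) \<subseteq> ?U" using ginvD4[OF I] .
  have i5: "finite (grp s)" using ginvD5[OF I] .
  have i6: "\<forall>S. yv s S \<noteq> 0 \<longrightarrow> S \<subseteq> ?U" using ginvD6[OF I] .
  have i7: "\<forall>S. yv s S \<ge> 0" using ginvD7[OF I] .
  have i8: "\<forall>w\<in>V - ?U. clock s \<le> atime w" using ginvD8[OF I] .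
  have i9: "\<forall>w\<in>?U. (\<Sum>S\<in>{S\<in>Pow V. w \<in> S}. yv s S) \<le> r * (clock s - atime w)" using ginvD9[OF I] .
  have i10: "\<forall>u\<in>?U. \<forall>w\<in>?U. u \<noteq> w \<longrightarrow> load V (yv s) u w \<le> bound u w" using ginvD10[OF I] .
  have i11: "waiting_cost atime (grp s) + (\<Sum>v\<in>?F ?U. (clock s - atime v))
     = (1/r) * (\<Sum>S\<in>Pow V. real (sur k S) * yv s S)" using ginvD11[OF I] .
  have UV: "?U \<subseteq> V" using i1 by blast
  have yv0: "\<forall>S. yv s S \<noteq> 0 \<longrightarrow> v \<notin> S" using i6 v(2) by blast
  have n3: "card (?F {v}) = sur k {v}"
  proof -
    have "?F {v} = {v}" using i4 v(2) unfolding free_def by blast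
    thus ?thesis using k by (simp add: sur_def)
  qed
  have n9: "(\<Sum>S\<in>{S\<in>Pow V. v \<in> S}. yv s S) \<le> r * (clock s - atime v)"
  proof -
    have "(\<Sum>S\<in>{S\<in>Pow V. v \<in> S}. yv s S) = 0"
      by (rule sum.neutral) (use yv0 in blast)
    thus ?thesis using v(3) by simp
  qed
  have n10: "load V (yv s) v w \<le> bound v w" if w: "w \<in> ?U" for w
  proof -
    have "load V (yv s) v w \<le> (\<Sum>S\<in>{S\<in>Pow V. w \<in> S}. yv s S)"
      by (rule load_le_star) (use fV i7 yv0 in auto)
    also have "\<dots> \<le> r * (clock s - atime w)" using i9 w by blast
    also have "\<dots> \<le> r * \<bar>atime v - atime w\<bar>" using r v(3) by (intro mult_left_mono) auto
    also have "\<dots> \<le> bound v w" using B v(1) w UV by blast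
    finally show ?thesis .
  qed
  have n10': "load V (yv s) w v \<le> bound w v" if w: "w \<in> ?U" for w
  proof -
    have "load V (yv s) w v = load V (yv s) v w" by (rule load_sym)
    also have "\<dots> \<le> (\<Sum>S\<in>{S\<in>Pow V. w \<in> S}. yv s S)"
      by (rule load_le_star) (use fV i7 yv0 in auto)
    also have "\<dots> \<le> r * (clock s - atime w)" using i9 w by blast
    also have "\<dots> \<le> r * \<bar>atime w - atime v\<bar>" using r v(3) by (intro mult_left_mono) auto
    also have "\<dots> \<le> bound w v" using B v(1) w UV by blast
    finally show ?thesis .
  qed
  have n11: "(\<Sum>x\<in>?F (insert v ?U). (clock s - atime x)) = (\<Sum>x\<in>?F ?U. (clock s - atime x))"
  proof -
    have e: "?F (insert v ?U) = insert v (?F ?U)" using i4 v(2) unfolding free_def by blast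
    have f: "finite (?F ?U)" using fV UV unfolding free_def by (meson finite_Diff finite_subset)
    have nv: "v \<notin> ?F ?U" using v(2) unfolding free_def by blast
    show ?thesis unfolding e using f nv v(3) by simp
  qed
  have a1: "\<forall>S\<in>insert {v} (act s). S \<noteq> {} \<and> S \<subseteq> V" using i1 v(1) by blast
  have a2: "\<forall>S\<in>insert {v} (act s). \<forall>T\<in>insert {v} (act s). S \<noteq> T \<longrightarrow> S \<inter> T = {}"
    using i2 v(2) by blast
  have a3: "\<forall>S\<in>insert {v} (act s). card (?F S) = sur k S" using i3 n3 by blast
  have a4: "\<Union>(fst ` grp s) \<subseteq> \<Union>(insert {v} (act s))" using i4 by blast
  have a6: "\<forall>S. yv s S \<noteq> 0 \<longrightarrow> S \<subseteq> \<Union>(insert {v} (act s))" using i6 by blast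
  have a8: "\<forall>w\<in>V - \<Union>(insert {v} (act s)). clock s \<le> atime w" using i8 by blast
  have a9: "\<forall>w\<in>\<Union>(insert {v} (act s)). (\<Sum>S\<in>{S\<in>Pow V. w \<in> S}. yv s S) \<le> r * (clock s - atime w)"
    using i9 n9 by auto
  have a10: "\<forall>u\<in>\<Union>(insert {v} (act s)). \<forall>w\<in>\<Union>(insert {v} (act s)). u \<noteq> w \<longrightarrow> load V (yv s) u w \<le> bound u w"
  proof (intro ballI impI)
    fix u w assume u: "u \<in> \<Union>(insert {v} (act s))" and w: "w \<in> \<Union>(insert {v} (act s))" and uw: "u \<noteq> w"
    show "load V (yv s) u w \<le> bound u w"
    proof (cases "u = v")
      case True
      then have "w \<in> ?U" using w uw by auto
      then show ?thesis using n10 True by blast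
    next
      case False
      then have u': "u \<in> ?U" using u by auto
      show ?thesis
      proof (cases "w = v")
        case True then show ?thesis using n10' u' by blast
      next
        case False then have "w \<in> ?U" using w by auto
        then show ?thesis using i10 u' uw by blast
      qed
    qed
  qed
  have a11: "waiting_cost atime (grp s) + (\<Sum>x\<in>?F (\<Union>(insert {v} (act s))). (clock s - atime x))
     = (1/r) * (\<Sum>S\<in>Pow V. real (sur k S) * yv s S)" using i11 n11 by simp
  have e: "act (s\<lparr>act := insert {v} (act s)\<rparr>) = insert {v} (act s)"
    "grp (s\<lparr>act := insert {v} (act s)\<rparr>) = grp s" "yv (s\<lparr>act := insert {v} (act s)\<rparr>) = yv s"
    "clock (s\<lparr>act := insert {v} (act s)\<rparr>) = clock s" by simp_all
  show ?thesis unfolding ginv_def e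
    using a1 a2 a3 a4 i5 a6 i7 a8 a9 a10 a11 by (intro conjI) assumption+
qed

lemma free_add: "free (G \<union> (\<lambda>g. (g, c)) ` NG) X = free G X - \<Union>NG"
  unfolding free_def by (auto simp: image_image)

lemma ginv_merge:
  assumes fV: "finite V" and r: "r > 0" and k: "k \<ge> 2"
    and I: "ginv k r V atime bound s"
    and S12: "S1 \<in> act s" "S2 \<in> act s" "S1 \<noteq> S2"
    and NG: "\<forall>g\<in>NG. g \<subseteq> free (grp s) (S1 \<union> S2) \<and> card g = k"
      "pairwise disjnt NG"
      "card (free (grp s) (S1 \<union> S2) - \<Union>NG) < k"
  shows "ginv k r V atime bound (s\<lparr>act := insert (S1 \<union> S2) (act s - {S1, S2}),
              grp := grp s \<union> (\<lambda>g. (g, clock s)) ` NG\<rparr>)"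
proof -
  let ?U = "\<Union>(act s)"
  let ?F = "free (grp s)"
  let ?A = "insert (S1 \<union> S2) (act s - {S1, S2})"
  let ?G = "grp s \<union> (\<lambda>g. (g, clock s)) ` NG"
  note Id = I[unfolded ginv_def]
  have i1: "\<forall>S\<in>act s. S \<noteq> {} \<and> S \<subseteq> V" using ginvD1[OF I] .
  have i2: "\<forall>S\<in>act s. \<forall>T\<in>act s. S \<noteq> T \<longrightarrow> S \<inter> T = {}" using ginvD2[OF I] .
  have i3: "\<forall>S\<in>act s. card (?F S) = sur k S" using ginvD3[OF I] .
  have i4: "\<Union>(fst ` grp s) \<subseteq> ?U" using ginvD4[OF I] .
  have i5: "finite (grp s)" using ginvD5[OF I] .
  have i6: "\<forall>S. yv s S \<noteq> 0 \<longrightarrow> S \<subseteq> ?U" using ginvD6[OF I] .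
  have i7: "\<forall>S. yv s S \<ge> 0" using ginvD7[OF I] .
  have i8: "\<forall>w\<in>V - ?U. clock s \<le> atime w" using ginvD8[OF I] .
  have i9: "\<forall>w\<in>?U. (\<Sum>S\<in>{S\<in>Pow V. w \<in> S}. yv s S) \<le> r * (clock s - atime w)" using ginvD9[OF I] .
  have i10: "\<forall>u\<in>?U. \<forall>w\<in>?U. u \<noteq> w \<longrightarrow> load V (yv s) u w \<le> bound u w" using ginvD10[OF I] .
  have i11: "waiting_cost atime (grp s) + (\<Sum>v\<in>?F ?U. (clock s - atime v))
     = (1/r) * (\<Sum>S\<in>Pow V. real (sur k S) * yv s S)" using ginvD11[OF I] .
  have UV: "?U \<subseteq> V" using i1 by blast
  have UA: "\<Union>?A = ?U" using S12 by blast
  have S1V: "S1 \<subseteq> V" "S2 \<subseteq> V" using i1 S12 by auto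
  have finS: "finite S1" "finite S2" using S1V fV finite_subset by auto
  have dis12: "S1 \<inter> S2 = {}" using i2 S12 by blast
  have NGsub: "\<Union>NG \<subseteq> ?F (S1 \<union> S2)" using NG(1) by blast
  have finF12: "finite (?F (S1 \<union> S2))" using finS unfolding free_def by auto
  have finNG: "finite NG"
    by (rule finite_subset[of _ "Pow (?F (S1 \<union> S2))"]) (use NG(1) finF12 in auto)
  have fing: "\<forall>g\<in>NG. finite g" using NG(1) finF12 finite_subset by blast
  have cardNG: "card (\<Union>NG) = k * card NG"
  proof -
    have "card (\<Union>NG) = sum card NG" by (rule card_Union_disjoint) (use NG(2) fing in auto)
    also have "\<dots> = k * card NG" using NG(1) by simp
    finally show ?thesis .
  qed
  have a1: "\<forall>S\<in>?A. S \<noteq> {} \<and> S \<subseteq> V" using i1 S12 by auto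
  have dU: "(S1 \<union> S2) \<inter> T = {}" if "T \<in> act s - {S1, S2}" for T
  proof -
    have "S1 \<inter> T = {}" "S2 \<inter> T = {}" using i2 S12 that by auto
    then show ?thesis by blast
  qed
  have a2: "\<forall>S\<in>?A. \<forall>T\<in>?A. S \<noteq> T \<longrightarrow> S \<inter> T = {}"
  proof (intro ballI impI)
    fix S T assume S: "S \<in> ?A" and T: "T \<in> ?A" and ST: "S \<noteq> T"
    show "S \<inter> T = {}"
    proof (cases "S = S1 \<union> S2")
      case True
      then have "T \<in> act s - {S1, S2}" using T ST by auto
      then show ?thesis using dU True by blast
    next
      case False
      then have S': "S \<in> act s - {S1, S2}" using S by auto
      show ?thesis
      proof (cases "T = S1 \<union> S2")
        case True then show ?thesis using dU[OF S'] by blast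
      next
        case False then have "T \<in> act s" using T by auto
        then show ?thesis using i2 S' ST by auto
      qed
    qed
  qed
  have n3: "card (free ?G (S1 \<union> S2)) = sur k (S1 \<union> S2)"
  proof -
    let ?X = "card (?F (S1 \<union> S2))"
    have e1: "?F (S1 \<union> S2) = ?F S1 \<union> ?F S2" unfolding free_def by blast
    have e2: "?F S1 \<inter> ?F S2 = {}" using dis12 unfolding free_def by blast
    have X: "?X = sur k S1 + sur k S2"
      unfolding e1 using card_Un_disjoint[OF _ _ e2] finS i3 S12 unfolding free_def by auto
    have c12: "card (S1 \<union> S2) = card S1 + card S2" using card_Un_disjoint[OF finS dis12] .
    have le: "k * card NG \<le> ?X" using card_mono[OF finF12 NGsub] cardNG by simp
    have lt: "?X - k * card NG < k"
      using NG(3) card_Diff_subset[OF _ NGsub] cardNG fing finNG by (simp add: finite_Union)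
    have "sur k (S1 \<union> S2) = (card S1 + card S2) mod k" unfolding sur_def c12 ..
    also have "\<dots> = ?X mod k" unfolding X sur_def by (simp add: mod_add_eq)
    also have "\<dots> = (?X - k * card NG + k * card NG) mod k" using le by simp
    also have "\<dots> = (?X - k * card NG) mod k" by simp
    also have "\<dots> = ?X - k * card NG" using lt by simp
    also have "\<dots> = card (?F (S1 \<union> S2) - \<Union>NG)"
      using card_Diff_subset[OF _ NGsub] cardNG fing finNG by (simp add: finite_Union)
    finally show ?thesis unfolding free_add by simp
  qed
  have a3: "\<forall>S\<in>?A. card (free ?G S) = sur k S"
  proof
    fix S assume S: "S \<in> ?A"
    show "card (free ?G S) = sur k S"
    proof (cases "S = S1 \<union> S2")
      case True then show ?thesis using n3 by simp
    next
      case False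
      then have S': "S \<in> act s" "S \<noteq> S1" "S \<noteq> S2" using S by auto
      then have "S \<inter> (S1 \<union> S2) = {}" using i2 S12 by blast
      then have "free ?G S = ?F S" unfolding free_add using NGsub unfolding free_def by blast
      then show ?thesis using i3 S' by simp
    qed
  qed
  have fG: "fst ` ?G = fst ` grp s \<union> NG" by (auto simp: image_Un image_image)
  have "\<Union>NG \<subseteq> ?U" using NGsub S12 unfolding free_def by blast
  then have a4: "\<Union>(fst ` ?G) \<subseteq> \<Union>?A" unfolding fG UA using i4 by auto
  have a5: "finite ?G" using i5 finNG by simp
  have disG: "grp s \<inter> (\<lambda>g. (g, clock s)) ` NG = {}"
  proof -
    { fix g assume g: "g \<in> NG" "(g, clock s) \<in> grp s"
      have "g \<noteq> {}" using NG(1) g k by auto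
      moreover have "g \<subseteq> \<Union>(fst ` grp s)" using g(2) by force
      moreover have "g \<inter> \<Union>(fst ` grp s) = {}" using NG(1) g(1) unfolding free_def by blast
      ultimately have False by blast }
    then show ?thesis by blast
  qed
  have wc: "waiting_cost atime ?G = waiting_cost atime (grp s) + (\<Sum>v\<in>\<Union>NG. (clock s - atime v))"
  proof -
    have "waiting_cost atime ?G = waiting_cost atime (grp s) + waiting_cost atime ((\<lambda>g. (g, clock s)) ` NG)"
      unfolding waiting_cost_def by (rule sum.union_disjoint) (use i5 finNG disG in auto)
    moreover have "waiting_cost atime ((\<lambda>g. (g, clock s)) ` NG) = (\<Sum>g\<in>NG. \<Sum>v\<in>g. (clock s - atime v))"
      unfolding waiting_cost_def by (subst sum.reindex) (auto simp: inj_on_def)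
    moreover have "(\<Sum>g\<in>NG. \<Sum>v\<in>g. (clock s - atime v)) = (\<Sum>v\<in>\<Union>NG. (clock s - atime v))"
      by (rule sum.Union_disjoint[symmetric, simplified comp_def])
        (use fing NG(2) in \<open>auto simp: pairwise_def disjnt_def\<close>)
    ultimately show ?thesis by simp
  qed
  have fs: "(\<Sum>v\<in>?F ?U. (clock s - atime v)) = (\<Sum>v\<in>?F ?U - \<Union>NG. (clock s - atime v)) + (\<Sum>v\<in>\<Union>NG. (clock s - atime v))"
  proof -
    have fin: "finite (?F ?U)" using fV UV unfolding free_def by (meson finite_Diff finite_subset)
    have sub: "\<Union>NG \<subseteq> ?F ?U" using NGsub S12 unfolding free_def by blast
    show ?thesis using sum.subset_diff[OF sub fin] by simp
  qed
  have a11: "waiting_cost atime ?G + (\<Sum>v\<in>free ?G (\<Union>?A). (clock s - atime v))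
     = (1/r) * (\<Sum>S\<in>Pow V. real (sur k S) * yv s S)"
    unfolding UA free_add wc using i11 fs by simp
  have a6: "\<forall>S. yv s S \<noteq> 0 \<longrightarrow> S \<subseteq> \<Union>?A" using i6 UA by simp
  have a8: "\<forall>w\<in>V - \<Union>?A. clock s \<le> atime w" using i8 UA by simp
  have a9: "\<forall>w\<in>\<Union>?A. (\<Sum>S\<in>{S\<in>Pow V. w \<in> S}. yv s S) \<le> r * (clock s - atime w)" using i9 UA by simp
  have a10: "\<forall>u\<in>\<Union>?A. \<forall>w\<in>\<Union>?A. u \<noteq> w \<longrightarrow> load V (yv s) u w \<le> bound u w" using i10 UA by simp
  let ?s' = "s\<lparr>act := ?A, grp := ?G\<rparr>"
  have e: "act ?s' = ?A" "grp ?s' = ?G" "yv ?s' = yv s" "clock ?s' = clock s" by simp_all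
  show ?thesis unfolding ginv_def e
    using a1 a2 a3 a4 a5 a6 i7 a8 a9 a10 a11 by (intro conjI) assumption+
qed

lemma ginv_advance:
  assumes fV: "finite V" and r: "r > 0" and k: "k \<ge> 2"
    and I: "ginv k r V atime bound s"
    and t: "clock s < t" "\<forall>w\<in>V - \<Union>(act s). t \<le> atime w"
    and cross: "\<forall>u\<in>\<Union>(act s). \<forall>w\<in>\<Union>(act s). \<not> same_active (act s) u w \<longrightarrow> load V (grow r s t) u w \<le> bound u w"
  shows "ginv k r V atime bound (s\<lparr>clock := t, yv := grow r s t\<rparr>)"
proof -
  let ?U = "\<Union>(act s)"
  let ?F = "free (grp s)"
  define \<delta> where "\<delta> = r * (t - clock s)"
  define P where "P S \<longleftrightarrow> S \<in> act s \<and> ?F S \<noteq> {}" for S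
  define y' where "y' = grow r s t"
  have y': "y' S = yv s S + (if P S then \<delta> else 0)" for S
    unfolding y'_def grow_def P_def \<delta>_def by simp
  have dpos: "\<delta> > 0" using r t(1) unfolding \<delta>_def by simp
  have i1: "\<forall>S\<in>act s. S \<noteq> {} \<and> S \<subseteq> V" using ginvD1[OF I] .
  have i2: "\<forall>S\<in>act s. \<forall>T\<in>act s. S \<noteq> T \<longrightarrow> S \<inter> T = {}" using ginvD2[OF I] .
  have i3: "\<forall>S\<in>act s. card (?F S) = sur k S" using ginvD3[OF I] .
  have i4: "\<Union>(fst ` grp s) \<subseteq> ?U" using ginvD4[OF I] .
  have i5: "finite (grp s)" using ginvD5[OF I] .
  have i6: "\<forall>S. yv s S \<noteq> 0 \<longrightarrow> S \<subseteq> ?U" using ginvD6[OF I] .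
  have i7: "\<forall>S. yv s S \<ge> 0" using ginvD7[OF I] .
  have i9: "\<forall>w\<in>?U. (\<Sum>S\<in>{S\<in>Pow V. w \<in> S}. yv s S) \<le> r * (clock s - atime w)" using ginvD9[OF I] .
  have i10: "\<forall>u\<in>?U. \<forall>w\<in>?U. u \<noteq> w \<longrightarrow> load V (yv s) u w \<le> bound u w" using ginvD10[OF I] .
  have i11: "waiting_cost atime (grp s) + (\<Sum>v\<in>?F ?U. (clock s - atime v))
     = (1/r) * (\<Sum>S\<in>Pow V. real (sur k S) * yv s S)" using ginvD11[OF I] .
  have UV: "?U \<subseteq> V" using i1 by blast
  have actV: "act s \<subseteq> Pow V" using i1 by blast
  have finact: "finite (act s)" using actV fV by (meson finite_Pow_iff finite_subset)
  have a6: "\<forall>S. y' S \<noteq> 0 \<longrightarrow> S \<subseteq> ?U"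
  proof (intro allI impI)
    fix S assume "y' S \<noteq> 0"
    then have "yv s S \<noteq> 0 \<or> P S" using y'[of S] by (auto split: if_splits)
    then show "S \<subseteq> ?U" using i6 unfolding P_def by blast
  qed
  have a7: "\<forall>S. y' S \<ge> 0" using i7 dpos y' by (simp add: add_nonneg_nonneg)
  have a9: "\<forall>w\<in>?U. (\<Sum>S\<in>{S\<in>Pow V. w \<in> S}. y' S) \<le> r * (t - atime w)"
  proof
    fix w assume w: "w \<in> ?U"
    then obtain T where T: "T \<in> act s" "w \<in> T" by blast
    let ?Q = "{S\<in>Pow V. w \<in> S}"
    have finQ: "finite ?Q" using fV by simp
    have "(\<Sum>S\<in>?Q. y' S) = (\<Sum>S\<in>?Q. yv s S) + (\<Sum>S\<in>?Q. if P S then \<delta> else 0)"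
      unfolding y' by (rule sum.distrib)
    also have "(\<Sum>S\<in>?Q. if P S then \<delta> else 0) = (\<Sum>S\<in>{S\<in>?Q. P S}. \<delta>)"
      using sum.inter_filter[OF finQ, of "\<lambda>_. \<delta>" P] by simp
    also have "\<dots> = real (card {S\<in>?Q. P S}) * \<delta>" by simp
    also have "\<dots> \<le> 1 * \<delta>"
    proof -
      have "{S\<in>?Q. P S} \<subseteq> {T}" using T i2 unfolding P_def by blast
      then have "card {S\<in>?Q. P S} \<le> card {T}" by (intro card_mono) auto
      then have "card {S\<in>?Q. P S} \<le> 1" by simp
      then show ?thesis using dpos by (intro mult_right_mono) auto
    qed
    finally have "(\<Sum>S\<in>?Q. y' S) \<le> (\<Sum>S\<in>?Q. yv s S) + \<delta>" by simp
    also have "\<dots> \<le> r * (clock s - atime w) + \<delta>" using bspec[OF i9 w] by simp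
    also have "\<dots> = r * (t - atime w)" unfolding \<delta>_def by (simp add: algebra_simps)
    finally show "(\<Sum>S\<in>?Q. y' S) \<le> r * (t - atime w)" .
  qed
  have a10: "\<forall>u\<in>?U. \<forall>w\<in>?U. u \<noteq> w \<longrightarrow> load V y' u w \<le> bound u w"
  proof (intro ballI impI)
    fix u w assume u: "u \<in> ?U" and w: "w \<in> ?U" and uw: "u \<noteq> w"
    show "load V y' u w \<le> bound u w"
    proof (cases "same_active (act s) u w")
      case False then show ?thesis using cross u w unfolding y'_def by blast
    next
      case True
      then obtain T where T: "T \<in> act s" "u \<in> T" "w \<in> T" unfolding same_active_def by blast
      have "load V y' u w = load V (yv s) u w + (\<Sum>S\<in>{S. S \<subseteq> V \<and> crosses S u w}. if P S then \<delta> else 0)"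
        unfolding load_def y' by (rule sum.distrib)
      moreover have "(\<Sum>S\<in>{S. S \<subseteq> V \<and> crosses S u w}. if P S then \<delta> else 0) = 0"
      proof (rule sum.neutral, rule ballI)
        fix S assume S: "S \<in> {S. S \<subseteq> V \<and> crosses S u w}"
        have "\<not> P S"
        proof
          assume "P S"
          then have Sa: "S \<in> act s" unfolding P_def by blast
          show False
          proof (cases "S = T")
            case True then show False using S T unfolding crosses_def by auto
          next
            case False then have "S \<inter> T = {}" using i2 Sa T by blast
            then show False using S T unfolding crosses_def by auto
          qed
        qed
        then show "(if P S then \<delta> else 0) = 0" by simp
      qed
      moreover have "load V (yv s) u w \<le> bound u w" using i10 u w uw by blast
      ultimately show ?thesis by simp
    qed
  qed
  have a11: "waiting_cost atime (grp s) + (\<Sum>v\<in>?F ?U. (t - atime v))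
     = (1/r) * (\<Sum>S\<in>Pow V. real (sur k S) * y' S)"
  proof -
    have finF: "finite (?F ?U)" using fV UV unfolding free_def by (meson finite_Diff finite_subset)
    have FU: "?F ?U = (\<Union>S\<in>act s. ?F S)" unfolding free_def by blast
    have cardF: "card (?F ?U) = (\<Sum>S\<in>act s. card (?F S))"
      unfolding FU
    proof (rule card_UN_disjoint[OF finact])
      show "\<forall>S\<in>act s. finite (?F S)"
      proof
        fix S assume "S \<in> act s"
        then have "S \<subseteq> V" using i1 by blast
        then have "finite S" using fV finite_subset by blast
        then show "finite (?F S)" unfolding free_def by simp
      qed
      show "\<forall>i\<in>act s. \<forall>j\<in>act s. i \<noteq> j \<longrightarrow> ?F i \<inter> ?F j = {}"
      proof (intro ballI impI)
        fix i j assume "i \<in> act s" "j \<in> act s" "i \<noteq> j"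
        then have "i \<inter> j = {}" using i2 by blast
        then show "?F i \<inter> ?F j = {}" unfolding free_def by blast
      qed
    qed
    have "(\<Sum>S\<in>Pow V. real (sur k S) * y' S) = (\<Sum>S\<in>Pow V. real (sur k S) * yv s S)
          + (\<Sum>S\<in>Pow V. real (sur k S) * (if P S then \<delta> else 0))"
      unfolding y' by (simp add: distrib_left sum.distrib)
    also have "(\<Sum>S\<in>Pow V. real (sur k S) * (if P S then \<delta> else 0))
             = (\<Sum>S\<in>act s. real (sur k S) * (if P S then \<delta> else 0))"
      by (rule sum.mono_neutral_right) (use fV actV in \<open>auto simp: P_def\<close>)
    also have "\<dots> = (\<Sum>S\<in>act s. \<delta> * real (card (?F S)))"
    proof (rule sum.cong[OF refl])
      fix S assume S: "S \<in> act s"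
      show "real (sur k S) * (if P S then \<delta> else 0) = \<delta> * real (card (?F S))"
        using i3 S by (cases "P S") (auto simp: P_def)
    qed
    also have "\<dots> = \<delta> * real (card (?F ?U))" unfolding cardF by (simp add: sum_distrib_left)
    finally have e: "(\<Sum>S\<in>Pow V. real (sur k S) * y' S) = (\<Sum>S\<in>Pow V. real (sur k S) * yv s S)
          + \<delta> * real (card (?F ?U))" .
    have e2: "(\<Sum>v\<in>?F ?U. (t - atime v)) = (\<Sum>v\<in>?F ?U. (clock s - atime v)) + real (card (?F ?U)) * (t - clock s)"
    proof -
      have "(\<Sum>v\<in>?F ?U. (t - atime v)) = (\<Sum>v\<in>?F ?U. (clock s - atime v) + (t - clock s))"
        by (rule sum.cong) auto
      also have "\<dots> = (\<Sum>v\<in>?F ?U. (clock s - atime v)) + real (card (?F ?U)) * (t - clock s)"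
        by (simp only: sum.distrib sum_constant)
      finally show ?thesis .
    qed
    show ?thesis unfolding e e2 using i11 r unfolding \<delta>_def by (simp add: field_simps)
  qed
  let ?s' = "s\<lparr>clock := t, yv := grow r s t\<rparr>"
  have e: "act ?s' = act s" "grp ?s' = grp s" "yv ?s' = y'" "clock ?s' = t" unfolding y'_def by simp_all
  have a8: "\<forall>w\<in>V - ?U. t \<le> atime w" using t(2) .
  have i1': "\<forall>S\<in>act s. S \<noteq> {} \<and> S \<subseteq> V" using i1 .
  show ?thesis unfolding ginv_def e
    using i1 i2 i3 i4 i5 a6 a7 a8 a9 a10 a11 by (intro conjI) assumption+
qed

lemma ginv_run:
  assumes fV: "finite V" and r: "r > 0" and k: "k \<ge> 2"
    and B: "\<forall>u\<in>V. \<forall>w\<in>V. r * \<bar>atime u - atime w\<bar> \<le> bound u w"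
    and at0: "\<forall>w\<in>V. 0 \<le> atime w"
    and run: "(gd_step k r V atime bound)\<^sup>*\<^sup>* gd_init s"
  shows "ginv k r V atime bound s"
  using run
proof (induction rule: rtranclp_induct)
  case base
  then show ?case using ginv_init[OF at0] .
next
  case (step s s')
  from step(2) show ?case
  proof (cases rule: gd_step.cases)
    case (arrive v)
    then show ?thesis using ginv_arrive[OF fV r k B step(3)] by simp
  next
    case (merge S1 S2 u w NG)
    then show ?thesis using ginv_merge[OF fV r k step(3)] by simp
  next
    case (advance t)
    then show ?thesis using ginv_advance[OF fV r k step(3)] by simp
  qed
qed

lemma D'_bdd:
  assumes fV: "finite V" and k: "k > 0" and kd: "k dvd card V"
  shows "bdd_above {D'_obj k V y | y. D'_feasible V bound y}"
proof -
  define C where "C = (\<Sum>u\<in>V. \<Sum>w\<in>V. \<bar>bound u w\<bar>)"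
  have Cge: "\<bar>bound u w\<bar> \<le> C" if "u \<in> V" "w \<in> V" for u w
  proof -
    have "\<bar>bound u w\<bar> \<le> (\<Sum>w\<in>V. \<bar>bound u w\<bar>)" by (rule member_le_sum) (use that fV in auto)
    also have "\<dots> \<le> C" unfolding C_def by (rule member_le_sum) (use that fV in \<open>auto intro: sum_nonneg\<close>)
    finally show ?thesis .
  qed
  have C0: "C \<ge> 0" unfolding C_def by (intro sum_nonneg) auto
  show ?thesis
  proof (rule bdd_aboveI[where M = "(\<Sum>S\<in>Pow V. real k * real k * C)"])
    fix x assume "x \<in> {D'_obj k V y | y. D'_feasible V bound y}"
    then obtain y where x: "x = D'_obj k V y" and F: "D'_feasible V bound y" by blast
    have y0: "\<forall>S. S \<subseteq> V \<longrightarrow> y S \<ge> 0" and yl: "\<forall>u\<in>V. \<forall>w\<in>V. u \<noteq> w \<longrightarrow> load V y u w \<le> bound u w"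
      using F unfolding D'_feasible_def by auto
    have "D'_obj k V y \<le> (\<Sum>S\<in>Pow V. real k * real k * C)"
      unfolding D'_obj_def
    proof (rule sum_mono)
      fix S assume S: "S \<in> Pow V"
      show "real (sur k S * (k - sur k S)) * y S \<le> real k * real k * C"
      proof (cases "sur k S = 0")
        case True then show ?thesis using C0 by simp
      next
        case False
        have "S \<noteq> {}" using False unfolding sur_def by auto
        then obtain u where u: "u \<in> S" by blast
        have "S \<noteq> V" using False kd unfolding sur_def by auto
        then obtain w where w: "w \<in> V" "w \<notin> S" using S by blast
        have uV: "u \<in> V" using u S by blast
        have fin: "finite {S. S \<subseteq> V \<and> crosses S u w}"
          by (rule finite_subset[of _ "Pow V"]) (use fV in auto)
        have "y S \<le> load V y u w" unfolding load_def
          by (rule member_le_sum) (use S u w y0 fin in \<open>auto simp: crosses_def\<close>)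
        also have "\<dots> \<le> bound u w" using yl uV w u by auto
        also have "\<dots> \<le> C" using Cge[OF uV w(1)] by simp
        finally have yC: "y S \<le> C" .
        have "sur k S \<le> k" unfolding sur_def using k by simp
        then have "sur k S * (k - sur k S) \<le> k * k" by (intro mult_le_mono) auto
        then have kk: "real (sur k S * (k - sur k S)) \<le> real k * real k"
          by (metis of_nat_le_iff of_nat_mult)
        have "real (sur k S * (k - sur k S)) * y S \<le> real k * real k * y S"
          by (rule mult_right_mono[OF kk]) (use y0 S in auto)
        also have "\<dots> \<le> real k * real k * C" by (rule mult_left_mono[OF yC]) simp
        finally show ?thesis .
      qed
    qed
    then show "x \<le> (\<Sum>S\<in>Pow V. real k * real k * C)" using x by simp
  qed
qed

theorem lemma5:
  fixes k \<gamma> m :: nat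
    and dH :: "'p list \<Rightarrow> real"
    and atime :: "nat \<Rightarrow> real"
    and pos :: "nat \<Rightarrow> 'p"
    and s :: "nat gd_state"
  assumes k2: "k \<ge> 2"
    and \<gamma>1: "1 \<le> \<gamma>" and \<gamma>k: "\<gamma> \<le> k - 1"
    and H: "is_Hmetric k \<gamma> dH"
    and mk: "k dvd m"
    and at_nonneg: "\<forall>v<m. atime v \<ge> 0"
    and at_mono: "mono_on {..<m} atime"
    and run: "(gd_step k (1 / (real \<gamma> * real k ^ 2)) {..<m} atime
                 (\<lambda>u w. opt_cost k dH atime pos u w / (real \<gamma> * real k ^ 2)))\<^sup>*\<^sup>* gd_init s"
    and all_matched: "\<Union>(fst ` grp s) = {..<m}"
  shows "waiting_cost atime (grp s)
           = (1 / (1 / (real \<gamma> * real k ^ 2))) * (\<Sum>S\<in>Pow {..<m}. real (sur k S) * yv s S)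
       \<and> (1 / (1 / (real \<gamma> * real k ^ 2))) * (\<Sum>S\<in>Pow {..<m}. real (sur k S) * yv s S)
           \<le> (1 / (1 / (real \<gamma> * real k ^ 2))) * D'_opt k \<gamma> dH {..<m} atime pos"
proof -
  define V where "V = {..<m}"
  define c where "c = real \<gamma> * real k ^ 2"
  define r where "r = 1 / c"
  define bound where "bound = (\<lambda>u w. opt_cost k dH atime pos u w / c)"
  have cpos: "c > 0" unfolding c_def using \<gamma>1 k2 by simp
  have r: "r > 0" unfolding r_def using cpos by simp
  have fV: "finite V" unfolding V_def by simp
  have dH0: "\<forall>p. length p = k \<longrightarrow> dH p \<ge> 0" using H unfolding is_Hmetric_def by blast
  have Hd: "Hdist k dH a b \<ge> 0" for a b
  proof -
    have "length (a # replicate (k - 1) b) = k" "length (b # replicate (k - 1) a) = k" using k2 by auto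
    then show ?thesis unfolding Hdist_def using dH0 by (simp add: add_nonneg_nonneg)
  qed
  have B: "\<forall>u\<in>V. \<forall>w\<in>V. r * \<bar>atime u - atime w\<bar> \<le> bound u w"
  proof (intro ballI)
    fix u w
    have "\<bar>atime u - atime w\<bar> \<le> opt_cost k dH atime pos u w" unfolding opt_cost_def using Hd[of "pos u" "pos w"] by simp
    then show "r * \<bar>atime u - atime w\<bar> \<le> bound u w" unfolding r_def bound_def using cpos
      by (simp add: divide_right_mono)
  qed
  have at0: "\<forall>w\<in>V. 0 \<le> atime w" using at_nonneg unfolding V_def by auto
  have run': "(gd_step k r V atime bound)\<^sup>*\<^sup>* gd_init s"
    using run unfolding r_def c_def V_def bound_def .
  have I: "ginv k r V atime bound s" by (rule ginv_run[OF fV r _ B at0 run']) (use k2 in auto)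
  have i1: "\<forall>S\<in>act s. S \<noteq> {} \<and> S \<subseteq> V" using ginvD1[OF I] .
  have i4: "\<Union>(fst ` grp s) \<subseteq> \<Union>(act s)" using ginvD4[OF I] .
  have i7: "\<forall>S. yv s S \<ge> 0" using ginvD7[OF I] .
  have i10: "\<forall>u\<in>\<Union>(act s). \<forall>w\<in>\<Union>(act s). u \<noteq> w \<longrightarrow> load V (yv s) u w \<le> bound u w" using ginvD10[OF I] .
  have i11: "waiting_cost atime (grp s) + (\<Sum>v\<in>free (grp s) (\<Union>(act s)). (clock s - atime v))
     = (1/r) * (\<Sum>S\<in>Pow V. real (sur k S) * yv s S)" using ginvD11[OF I] .
  have am: "\<Union>(fst ` grp s) = V" using all_matched unfolding V_def .
  have s1: "\<Union>(act s) \<subseteq> V" using i1 by blast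
  have UV: "\<Union>(act s) = V" using s1 i4 am by (intro equalityI) auto
  have Fe: "free (grp s) (\<Union>(act s)) = {}" unfolding free_def UV am by simp
  have eq: "waiting_cost atime (grp s) = (1/r) * (\<Sum>S\<in>Pow V. real (sur k S) * yv s S)"
    using i11 unfolding Fe by simp
  have feas: "D'_feasible V bound (yv s)" unfolding D'_feasible_def using i7 i10 UV by auto
  have bdd: "bdd_above {D'_obj k V y | y. D'_feasible V bound y}"
    by (rule D'_bdd[OF fV]) (use k2 mk in \<open>auto simp: V_def\<close>)
  have le1: "(\<Sum>S\<in>Pow V. real (sur k S) * yv s S) \<le> D'_obj k V (yv s)"
    unfolding D'_obj_def
  proof (rule sum_mono)
    fix S assume "S \<in> Pow V"
    have "sur k S < k" unfolding sur_def using k2 by simp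
    then have "1 \<le> k - sur k S" by simp
    then have "sur k S * 1 \<le> sur k S * (k - sur k S)" by (rule mult_le_mono2)
    then have "sur k S \<le> sur k S * (k - sur k S)" by simp
    then have "real (sur k S) \<le> real (sur k S * (k - sur k S))" by (metis of_nat_le_iff)
    then show "real (sur k S) * yv s S \<le> real (sur k S * (k - sur k S)) * yv s S"
      by (rule mult_right_mono) (use i7 in auto)
  qed
  have le2: "D'_obj k V (yv s) \<le> D'_opt k \<gamma> dH V atime pos"
    unfolding D'_opt_def
    by (rule cSup_upper) (use feas bdd in \<open>auto simp: bound_def c_def\<close>)
  have le: "(1/r) * (\<Sum>S\<in>Pow V. real (sur k S) * yv s S) \<le> (1/r) * D'_opt k \<gamma> dH V atime pos"
    by (rule mult_left_mono) (use le1 le2 r in auto)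
  show ?thesis using eq le unfolding r_def c_def V_def by simp
qed

end
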